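(* Let $(X,\mu)$ be a non-atomic probability measure space, $\mathcal{T}$ a tree on $X$, $\mathcal{M}=\mathcal{M}_{\mathcal{T}}$ the associated maximal operator, and $p>1$. For $0<f\le F$ let $$B(f,F)=\sup\Big\{\|\mathcal{M}\phi\|_{p,\infty} : \phi\ge0,\ \int_X\phi\,d\mu=f,\ |||\phi|||_{p,\infty}=F\Big\}.$$ Then $B(f,F)=F$.
   Context: A tree on $(X,\mu)$ is a set $\mathcal{T}$ of measurable subsets of $X$ such that: (i) $X\in\mathcal{T}$ and $\mu(I)>0$ for every $I\in\mathcal{T}$; (ii) every $I\in\mathcal{T}$ has an associated finite subset $\mathcal{C}(I)\subseteq\mathcal{T}$ with at least two elements, whose elements are pairwise almost disjoint (i.e. intersections have measure zero) subsets of $I$ with union $I$; (iii) $\mathcal{T}=\bigcup_{m\ge0}\mathcal{T}_{(m)}$ where $\mathcal{T}_{(0)}=\{X\}$ and $\mathcal{T}_{(m+1)}=\bigcup_{I\in\mathcal{T}_{(m)}}\mathcal{C}(I)$; (iv) $\lim_{m\to\infty}\sup_{I\in\mathcal{T}_{(m)}}\mu(I)=0$. The associated maximal operator is $\mathcal{M}_{\mathcal{T}}\phi(x)=\sup\{\frac{1}{\mu(I)}\int_I|\phi|\,d\mu : x\in I\in\mathcal{T}\}$ for $\phi\in L^1(X,\mu)$. $\|g\|_{p,\infty}=\sup\{\lambda\,\mu(\{|g|>\lambda\})^{1/p}:\lambda>0\}$ and $|||\phi|||_{p,\infty}=\sup\{\mu(E)^{-1+1/p}\int_E|\phi|\,d\mu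 : E \text{ measurable}, \mu(E)>0\}$. *)

theory Defs
  imports "HOL-Probability.Probability"
begin

definition nonatomic :: "'a measure \<Rightarrow> bool" where
  "nonatomic M \<longleftrightarrow> (\<forall>A\<in>sets M. 0 < measure M A \<longrightarrow>
      (\<exists>B\<in>sets M. B \<subseteq> A \<and> 0 < measure M B \<and> measure M B < measure M A))"

primrec tree_level :: "('a set \<Rightarrow> 'a set set) \<Rightarrow> 'a set \<Rightarrow> nat \<Rightarrow> 'a set set" where
  "tree_level C X 0 = {X}"
| "tree_level C X (Suc m) = \<Union> (C ` tree_level C X m)"

definition is_tree_with :: "'a measure \<Rightarrow> 'a set set \<Rightarrow> ('a set \<Rightarrow> 'a set set) \<Rightarrow> bool" where
  "is_tree_with M T C \<longleftrightarrow>
     space M \<in> T \<and> (\<forall>I\<in>T. I \<in> sets M \<and> 0 < measure M I)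
   \<and> (\<forall>I\<in>T. finite (C I) \<and> 2 \<le> card (C I) \<and> C I \<subseteq> T \<and> (\<forall>J\<in>C I. J \<subseteq> I)
        \<and> (\<forall>J\<in>C I. \<forall>K\<in>C I. J \<noteq> K \<longrightarrow> measure M (J \<inter> K) = 0)
        \<and> \<Union> (C I) = I)
   \<and> T = (\<Union>m. tree_level C (space M) m)
   \<and> (\<lambda>m. Sup (measure M ` tree_level C (space M) m)) \<longlonglongrightarrow> 0"

definition is_tree :: "'a measure \<Rightarrow> 'a set set \<Rightarrow> bool" where
  "is_tree M T \<longleftrightarrow> (\<exists>C. is_tree_with M T C)"

definition maximal_op :: "'a measure \<Rightarrow> 'a set set \<Rightarrow> ('a \<Rightarrow> real) \<Rightarrow> 'a \<Rightarrow> ennreal" where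
  "maximal_op M T \<phi> x =
     (SUP I\<in>{I\<in>T. x \<in> I}. (\<integral>\<^sup>+y\<in>I. ennreal \<bar>\<phi> y\<bar> \<partial>M) / emeasure M I)"

definition weak_norm :: "'a measure \<Rightarrow> real \<Rightarrow> ('a \<Rightarrow> ennreal) \<Rightarrow> ennreal" where
  "weak_norm M p g =
     (SUP t\<in>{0<..}. ennreal (t * (measure M {x\<in>space M. ennreal t < g x}) powr (1/p)))"

definition triple_norm :: "'a measure \<Rightarrow> real \<Rightarrow> ('a \<Rightarrow> real) \<Rightarrow> ennreal" where
  "triple_norm M p \<phi> =
     (SUP E\<in>{E\<in>sets M. 0 < measure M E}.
        ennreal (measure M E powr (-1 + 1/p)) * (\<integral>\<^sup>+x\<in>E. ennreal \<bar>\<phi> x\<bar> \<partial>M))"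

definition Bfun :: "'a measure \<Rightarrow> 'a set set \<Rightarrow> real \<Rightarrow> real \<Rightarrow> real \<Rightarrow> ennreal" where
  "Bfun M T p f F =
     Sup {weak_norm M p (maximal_op M T \<phi>) | \<phi>.
           integrable M \<phi> \<and> (\<forall>x\<in>space M. 0 \<le> \<phi> x) \<and>
           integral\<^sup>L M \<phi> = f \<and> triple_norm M p \<phi> = ennreal F}"

end

theory Submission
  imports Defs
begin


lemma set_integrable_of_integrable:
  fixes g :: "'a \<Rightarrow> real"
  shows "integrable M g \<Longrightarrow> A \<in> sets M \<Longrightarrow> set_integrable M A g"
  unfolding set_integrable_def using integrable_mult_indicator[of A M g] by simp

lemma set_integral_UN_AE_fin:
  fixes g :: "'a \<Rightarrow> real"
  assumes "finite K" "\<And>k. k\<in>K \<Longrightarrow> A k \<in> sets M"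
    "\<And>j k. j\<in>K \<Longrightarrow> k\<in>K \<Longrightarrow> j\<noteq>k \<Longrightarrow> A j \<inter> A k \<in> null_sets M" "integrable M g"
  shows "(LINT x:(\<Union>k\<in>K. A k)|M. g x) = (\<Sum>k\<in>K. LINT x:A k|M. g x)"
  using assms
proof (induction K rule: finite_induct)
  case empty show ?case by (simp add: set_lebesgue_integral_def)
next
  case (insert k K)
  have "A k \<inter> (\<Union>j\<in>K. A j) = (\<Union>j\<in>K. A k \<inter> A j)" by auto
  moreover have "(\<Union>j\<in>K. A k \<inter> A j) \<in> null_sets M"
    using insert by (intro null_sets.finite_UN) auto
  ultimately have null: "A k \<inter> (\<Union>j\<in>K. A j) \<in> null_sets M" by simp
  have ae: "AE x in M. \<not> (x \<in> A k \<and> x \<in> (\<Union>j\<in>K. A j))"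
    using AE_not_in[OF null] by auto
  have "(LINT x:(\<Union>j\<in>insert k K. A j)|M. g x) = (LINT x:A k \<union> (\<Union>j\<in>K. A j)|M. g x)" by simp
  also have "\<dots> = (LINT x:A k|M. g x) + (LINT x:(\<Union>j\<in>K. A j)|M. g x)"
    using insert by (intro set_integral_Un_AE ae) (auto intro!: set_integrable_of_integrable)
  also have "\<dots> = (\<Sum>j\<in>insert k K. LINT x:A j|M. g x)"
    using insert by simp
  finally show ?case .
qed

lemma tw_root: "is_tree_with M T C \<Longrightarrow> space M \<in> T"
  unfolding is_tree_with_def by (rule conjunct1)

lemma tw_T: "is_tree_with M T C \<Longrightarrow> I \<in> T \<Longrightarrow> I \<in> sets M \<and> 0 < measure M I"
  unfolding is_tree_with_def by (drule conjunct2, drule conjunct1, erule bspec)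

lemma tw_C: "is_tree_with M T C \<Longrightarrow> I \<in> T \<Longrightarrow> finite (C I) \<and> 2 \<le> card (C I) \<and> C I \<subseteq> T \<and> (\<forall>J\<in>C I. J \<subseteq> I)
        \<and> (\<forall>J\<in>C I. \<forall>K\<in>C I. J \<noteq> K \<longrightarrow> measure M (J \<inter> K) = 0)
        \<and> \<Union> (C I) = I"
  unfolding is_tree_with_def by (drule conjunct2, drule conjunct2, drule conjunct1, erule bspec)

lemma tw_Teq: "is_tree_with M T C \<Longrightarrow> T = (\<Union>m. tree_level C (space M) m)"
  unfolding is_tree_with_def by (drule conjunct2, drule conjunct2, drule conjunct2, erule conjunct1)

lemma tw_lim: "is_tree_with M T C \<Longrightarrow> (\<lambda>m. Sup (measure M ` tree_level C (space M) m)) \<longlonglongrightarrow> 0"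
  unfolding is_tree_with_def by (drule conjunct2, drule conjunct2, drule conjunct2, erule conjunct2)

lemma tree_level_Suc':
  "tree_level C I (Suc m) = (\<Union>K\<in>C I. tree_level C K m)"
proof (induction m)
  case 0
  have "tree_level C I (Suc 0) = \<Union> (C ` {I})" by (simp only: tree_level.simps)
  also have "\<dots> = C I" by blast
  also have "\<dots> = (\<Union>K\<in>C I. {K})" by blast
  also have "\<dots> = (\<Union>K\<in>C I. tree_level C K 0)" by (simp only: tree_level.simps)
  finally show ?case .
next
  case (Suc m)
  have "tree_level C I (Suc (Suc m)) = \<Union> (C ` tree_level C I (Suc m))" by (simp only: tree_level.simps(2))
  also have "\<dots> = \<Union> (C ` (\<Union>K\<in>C I. tree_level C K m))" by (simp only: Suc.IH)
  also have "\<dots> = (\<Union>K\<in>C I. \<Union> (C ` tree_level C K m))" by blast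
  also have "\<dots> = (\<Union>K\<in>C I. tree_level C K (Suc m))" by (simp only: tree_level.simps(2))
  finally show ?case .
qed

lemma tree_level_sub:
  assumes "is_tree_with M T C" "I \<in> T"
  shows "tree_level C I m \<subseteq> T \<and> (\<forall>J\<in>tree_level C I m. J \<subseteq> I)"
proof (induction m)
  case 0 then show ?case using assms by auto
next
  case (Suc m)
  have ch: "C J \<subseteq> T \<and> (\<forall>K\<in>C J. K \<subseteq> J)" if "J \<in> T" for J
    using tw_C[OF assms(1) that] by simp
  show ?case
  proof
    show "tree_level C I (Suc m) \<subseteq> T"
    proof
      fix J assume "J \<in> tree_level C I (Suc m)"
      then obtain K where K: "K \<in> tree_level C I m" "J \<in> C K" by (auto simp only: tree_level.simps)
      have "K \<in> T" using Suc K(1) by blast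
      then show "J \<in> T" using ch[of K] K(2) by blast
    qed
    show "\<forall>J\<in>tree_level C I (Suc m). J \<subseteq> I"
    proof
      fix J assume "J \<in> tree_level C I (Suc m)"
      then obtain K where K: "K \<in> tree_level C I m" "J \<in> C K" by (auto simp only: tree_level.simps)
      have "K \<in> T" "K \<subseteq> I" using Suc K(1) by blast+
      then show "J \<subseteq> I" using ch[of K] K(2) by blast
    qed
  qed
qed

primrec Om :: "'a set set \<Rightarrow> ('a set \<Rightarrow> 'a set set) \<Rightarrow> 'a set \<Rightarrow> nat \<Rightarrow> 'a set" where
  "Om S C I 0 = (if I \<in> S then I else {})"
| "Om S C I (Suc n) = (if I \<in> S then I else (\<Union>J\<in>C I. Om S C J n))"

lemma Om_props:
  fixes g :: "'a \<Rightarrow> real"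
  assumes fm: "finite_measure M" and tr: "is_tree_with M T C" and S: "S \<subseteq> T" and g: "integrable M g"
    and pos: "\<And>I. I \<in> S \<Longrightarrow> 0 \<le> (LINT x:I|M. g x)"
  shows "I \<in> T \<Longrightarrow> Om S C I n \<in> sets M \<and> Om S C I n \<subseteq> I \<and> Om S C I n \<subseteq> \<Union>S
     \<and> 0 \<le> (LINT x:Om S C I n|M. g x) \<and> Om S C I n \<subseteq> Om S C I (Suc n)"
proof (induction n arbitrary: I)
  case 0
  have Is: "I \<in> sets M" using tw_T[OF tr 0] by simp
  show ?case
  proof (cases "I \<in> S")
    case True
    then show ?thesis using Is pos[OF True] by (simp add: Union_upper)
  next
    case False
    then show ?thesis by (simp add: set_lebesgue_integral_def)
  qed
next
  case (Suc n)
  have ch: "finite (C I)" "C I \<subseteq> T" "\<forall>K\<in>C I. K \<subseteq> I"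
    "\<forall>J\<in>C I. \<forall>K\<in>C I. J \<noteq> K \<longrightarrow> measure M (J \<inter> K) = 0"
    using tw_C[OF tr Suc.prems] by simp_all
  have Is: "I \<in> sets M" using tw_T[OF tr Suc.prems] by simp
  have chT: "J \<in> T" if "J \<in> C I" for J using ch(2) that by (rule subsetD)
  have chS: "J \<in> sets M" if "J \<in> C I" for J using tw_T[OF tr chT[OF that]] by simp
  have chI: "J \<subseteq> I" if "J \<in> C I" for J using ch(3) that by simp
  show ?case
  proof (cases "I \<in> S")
    case True then show ?thesis using pos[OF True] Is by (simp add: Union_upper)
  next
    case False
    have IH: "Om S C J n \<in> sets M \<and> Om S C J n \<subseteq> J \<and> Om S C J n \<subseteq> \<Union>S
       \<and> 0 \<le> (LINT x:Om S C J n|M. g x) \<and> Om S C J n \<subseteq> Om S C J (Suc n)" if J: "J \<in> C I" for J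
      using chT[OF J] by (rule Suc.IH)
    have IH1: "Om S C J n \<in> sets M" and IH2: "Om S C J n \<subseteq> J" and IH3: "Om S C J n \<subseteq> \<Union>S"
      and IH4: "0 \<le> (LINT x:Om S C J n|M. g x)" and IH5: "Om S C J n \<subseteq> Om S C J (Suc n)"
      if J: "J \<in> C I" for J
      using IH[OF J] by simp_all
    have null: "Om S C J n \<inter> Om S C K n \<in> null_sets M" if "J \<in> C I" "K \<in> C I" "J \<noteq> K" for J K
    proof -
      have m0: "measure M (J \<inter> K) = 0" using ch(4) that by simp
      have JKs: "J \<inter> K \<in> sets M" using chS[OF that(1)] chS[OF that(2)] by (rule sets.Int)
      have "emeasure M (J \<inter> K) = 0"
        using finite_measure.emeasure_eq_measure[OF fm, of "J \<inter> K"] m0 by simp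
      then have jk: "J \<inter> K \<in> null_sets M" using JKs by (simp add: null_sets_def)
      show ?thesis
      proof (rule null_sets_subset[OF jk])
        show "Om S C J n \<inter> Om S C K n \<in> sets M"
          using IH1[OF that(1)] IH1[OF that(2)] by (rule sets.Int)
        show "Om S C J n \<inter> Om S C K n \<subseteq> J \<inter> K"
          using IH2[OF that(1)] IH2[OF that(2)] by (rule Int_mono)
      qed
    qed
    have "(LINT x:(\<Union>J\<in>C I. Om S C J n)|M. g x) = (\<Sum>J\<in>C I. LINT x:Om S C J n|M. g x)"
      by (rule set_integral_UN_AE_fin[OF ch(1) IH1 null g])
    also have "\<dots> \<ge> 0" by (rule sum_nonneg) (rule IH4)
    finally have nn: "0 \<le> (LINT x:(\<Union>J\<in>C I. Om S C J n)|M. g x)" .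
    have s1: "(\<Union>J\<in>C I. Om S C J n) \<in> sets M"
      by (rule sets.finite_UN[OF ch(1) IH1])
    have s2: "(\<Union>J\<in>C I. Om S C J n) \<subseteq> I"
      using IH2 chI by blast
    have s3: "(\<Union>J\<in>C I. Om S C J n) \<subseteq> \<Union>S"
      using IH3 by blast
    have s4: "(\<Union>J\<in>C I. Om S C J n) \<subseteq> (\<Union>J\<in>C I. Om S C J (Suc n))"
      using IH5 by blast
    have e1: "Om S C I (Suc n) = (\<Union>J\<in>C I. Om S C J n)" using False by simp
    have e2: "Om S C I (Suc (Suc n)) = (\<Union>J\<in>C I. Om S C J (Suc n))" using False by simp
    show ?thesis unfolding e1 e2 using s1 s2 s3 nn s4 by (intro conjI)
  qed
qed

lemma Om_level:
  assumes tr: "is_tree_with M T C"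
  shows "I \<in> T \<Longrightarrow> J \<in> tree_level C I m \<Longrightarrow> J \<in> S \<Longrightarrow> J \<subseteq> Om S C I m"
proof (induction m arbitrary: I)
  case 0 then show ?case by simp
next
  case (Suc m)
  show ?case
  proof (cases "I \<in> S")
    case True
    have "J \<subseteq> I" using tree_level_sub[OF tr Suc.prems(1), of "Suc m"] Suc.prems(2) by blast
    then show ?thesis using True by simp
  next
    case False
    from Suc.prems(2) obtain K where K: "K \<in> C I" "J \<in> tree_level C K m"
      unfolding tree_level_Suc' by blast
    have "C I \<subseteq> T" using tw_C[OF tr Suc.prems(1)] by simp
    then have "K \<in> T" using K by blast
    then have "J \<subseteq> Om S C K m" using Suc.IH K(2) Suc.prems(3) by blast
    moreover have "Om S C I (Suc m) = (\<Union>J\<in>C I. Om S C J m)" using False by simp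
    ultimately show ?thesis using K(1) by blast
  qed
qed

lemma set_integral_nonneg_real:
  fixes \<phi> :: "'a \<Rightarrow> real"
  assumes "\<forall>x\<in>space M. 0 \<le> \<phi> x"
  shows "0 \<le> (LINT x:A|M. \<phi> x)"
  unfolding set_lebesgue_integral_def
  using assms by (intro integral_nonneg_AE AE_I2) (auto simp: indicator_def)

lemma nnint_eq:
  fixes \<phi> :: "'a \<Rightarrow> real"
  assumes "integrable M \<phi>" "\<forall>x\<in>space M. 0 \<le> \<phi> x" "A \<in> sets M"
  shows "(\<integral>\<^sup>+x\<in>A. ennreal \<bar>\<phi> x\<bar> \<partial>M) = ennreal (LINT x:A|M. \<phi> x)"
proof -
  have "(\<integral>\<^sup>+x\<in>A. ennreal \<bar>\<phi> x\<bar> \<partial>M) = (\<integral>\<^sup>+x\<in>A. ennreal (\<phi> x) \<partial>M)"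
    using assms(2) by (intro nn_integral_cong) simp
  also have "\<dots> = ennreal (LINT x:A|M. \<phi> x)"
    apply (rule nn_set_integral_eq_set_integral)
    using assms by (auto intro!: AE_I2)
  finally show ?thesis .
qed


lemma upper_bound:
  fixes \<phi> :: "'a \<Rightarrow> real"
  assumes M: "prob_space M" and tr: "is_tree_with M T C"
    and phi: "integrable M \<phi>" "\<forall>x\<in>space M. 0 \<le> \<phi> x"
    and tn: "triple_norm M p \<phi> = ennreal F" and p: "1 < p" and t: "0 < t" and F: "0 \<le> F"
  shows "t * measure M {x\<in>space M. ennreal t < maximal_op M T \<phi> x} powr (1/p) \<le> F"
proof -
  interpret prob_space M by (rule M)
  have fm: "finite_measure M" by (rule finite_measureI) (simp add: emeasure_space_1)
  note trd = tr[unfolded is_tree_with_def]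
  have root: "space M \<in> T" using trd by (rule conjunct1)
  have Tsets: "\<And>I. I\<in>T \<Longrightarrow> I \<in> sets M \<and> 0 < measure M I"
    using conjunct1[OF conjunct2[OF trd]] by blast
  have Teq: "T = (\<Union>m. tree_level C (space M) m)"
    using conjunct1[OF conjunct2[OF conjunct2[OF conjunct2[OF trd]]]] .
  define g where "g x = \<phi> x - t" for x
  have gi: "integrable M g" unfolding g_def by (intro Bochner_Integration.integrable_diff phi(1) integrable_const)
  have nu: "(LINT x:A|M. g x) = (LINT x:A|M. \<phi> x) - t * measure M A" if "A \<in> sets M" for A
  proof -
    have "(LINT x:A|M. g x) = (LINT x:A|M. \<phi> x) - (LINT x:A|M. t)"
      unfolding g_def by (intro set_integral_diff(2) set_integrable_of_integrable phi(1) integrable_const that)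
    also have "(LINT x:A|M. t) = measure M A * t"
      using that by (subst set_integral_const) auto
    finally show ?thesis by simp
  qed
  define S where "S = {I\<in>T. 0 < (LINT x:I|M. g x)}"
  have SsubT: "S \<subseteq> T" unfolding S_def by blast
  have Spos: "\<And>I. I \<in> S \<Longrightarrow> 0 \<le> (LINT x:I|M. g x)" unfolding S_def by (blast intro: less_imp_le)
  have OPs: "Om S C (space M) n \<in> sets M \<and> Om S C (space M) n \<subseteq> space M \<and> Om S C (space M) n \<subseteq> \<Union>S
     \<and> 0 \<le> (LINT x:Om S C (space M) n|M. g x) \<and> Om S C (space M) n \<subseteq> Om S C (space M) (Suc n)" for n
    by (rule Om_props[OF fm tr SsubT gi Spos root])
  have tb: "measure M E powr (-1+1/p) * (LINT x:E|M. \<phi> x) \<le> F" if E: "E \<in> sets M" "0 < measure M E" for E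
  proof -
    have "ennreal (measure M E powr (-1+1/p)) * (\<integral>\<^sup>+x\<in>E. ennreal \<bar>\<phi> x\<bar> \<partial>M) \<le> triple_norm M p \<phi>"
      unfolding triple_norm_def by (rule SUP_upper) (use E in auto)
    then have "ennreal (measure M E powr (-1+1/p) * (LINT x:E|M. \<phi> x)) \<le> ennreal F"
      using nnint_eq[OF phi E(1)] tn set_integral_nonneg_real[OF phi(2), of E]
      by (simp add: ennreal_mult)
    then show ?thesis using F by simp
  qed
  have key: "(ennreal t < (\<integral>\<^sup>+y\<in>I. ennreal \<bar>\<phi> y\<bar> \<partial>M) / emeasure M I) \<longleftrightarrow> I \<in> S" if I: "I \<in> T" for I
  proof -
    have Is: "I \<in> sets M" "0 < measure M I" using Tsets[OF I] by auto
    have "(\<integral>\<^sup>+y\<in>I. ennreal \<bar>\<phi> y\<bar> \<partial>M) / emeasure M I = ennreal ((LINT x:I|M. \<phi> x) / measure M I)"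
      using Is nnint_eq[OF phi Is(1)] set_integral_nonneg_real[OF phi(2), of I]
      by (simp add: emeasure_eq_measure divide_ennreal)
    then have "(ennreal t < (\<integral>\<^sup>+y\<in>I. ennreal \<bar>\<phi> y\<bar> \<partial>M) / emeasure M I) \<longleftrightarrow> t < (LINT x:I|M. \<phi> x) / measure M I"
      using t by (simp add: ennreal_less_iff)
    also have "\<dots> \<longleftrightarrow> t * measure M I < (LINT x:I|M. \<phi> x)"
      using Is by (simp add: pos_less_divide_eq)
    also have "\<dots> \<longleftrightarrow> I \<in> S" unfolding S_def using nu[OF Is(1)] I by auto
    finally show ?thesis .
  qed
  have Omega: "{x\<in>space M. ennreal t < maximal_op M T \<phi> x} = (\<Union>n. Om S C (space M) n)"
  proof
    show "{x\<in>space M. ennreal t < maximal_op M T \<phi> x} \<subseteq> (\<Union>n. Om S C (space M) n)"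
    proof
      fix x assume x: "x \<in> {x\<in>space M. ennreal t < maximal_op M T \<phi> x}"
      then obtain I where I: "I \<in> T" "x \<in> I" "ennreal t < (\<integral>\<^sup>+y\<in>I. ennreal \<bar>\<phi> y\<bar> \<partial>M) / emeasure M I"
        unfolding maximal_op_def by (auto simp: less_SUP_iff)
      then have IS: "I \<in> S" using key by auto
      from I(1) Teq obtain m where "I \<in> tree_level C (space M) m" by auto
      then have "I \<subseteq> Om S C (space M) m" using Om_level[OF tr root _ IS] by auto
      then show "x \<in> (\<Union>n. Om S C (space M) n)" using I by auto
    qed
  next
    show "(\<Union>n. Om S C (space M) n) \<subseteq> {x\<in>space M. ennreal t < maximal_op M T \<phi> x}"
    proof
      fix x assume "x \<in> (\<Union>n. Om S C (space M) n)"
      then obtain n where xn: "x \<in> Om S C (space M) n" by auto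
      then obtain I where I: "I \<in> S" "x \<in> I" using OPs[of n] by auto
      have "ennreal t < (\<integral>\<^sup>+y\<in>I. ennreal \<bar>\<phi> y\<bar> \<partial>M) / emeasure M I"
        using key I SsubT by auto
      then have "ennreal t < maximal_op M T \<phi> x"
        unfolding maximal_op_def using I SsubT by (auto simp: less_SUP_iff)
      then show "x \<in> {x\<in>space M. ennreal t < maximal_op M T \<phi> x}" using xn OPs[of n] by auto
    qed
  qed
  have bound_n: "measure M (Om S C (space M) n) \<le> (F/t) powr p" for n
  proof -
    define A where "A = Om S C (space M) n"
    have A: "A \<in> sets M" "0 \<le> (LINT x:A|M. g x)" using OPs[of n] unfolding A_def by auto
    have tA: "t * measure M A \<le> (LINT x:A|M. \<phi> x)" using A nu[OF A(1)] by simp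
    show ?thesis
    proof (cases "measure M A = 0")
      case True then show ?thesis unfolding A_def[symmetric] by simp
    next
      case False
      then have mpos: "0 < measure M A" using measure_nonneg[of M A] by linarith
      have pw: "measure M A * measure M A powr (-1+1/p) = measure M A powr (1/p)"
      proof -
        have "measure M A * measure M A powr (-1+1/p) = measure M A powr 1 * measure M A powr (-1+1/p)"
          using mpos by simp
        also have "\<dots> = measure M A powr (1 + (-1+1/p))" by (rule powr_add[symmetric])
        finally show ?thesis by simp
      qed
      have "t * measure M A powr (1/p) = measure M A powr (-1+1/p) * (t * measure M A)"
        using pw by (simp add: algebra_simps)
      also have "\<dots> \<le> measure M A powr (-1+1/p) * (LINT x:A|M. \<phi> x)"
        using tA by (intro mult_left_mono) auto
      also have "\<dots> \<le> F" using tb[OF A(1) mpos] .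
      finally have "measure M A powr (1/p) \<le> F / t" using t by (simp add: pos_le_divide_eq mult.commute)
      then have "(measure M A powr (1/p)) powr p \<le> (F/t) powr p"
        using p by (intro powr_mono2) auto
      then show ?thesis using p unfolding A_def[symmetric] by (simp add: powr_powr)
    qed
  qed
  have lim: "(\<lambda>n. measure M (Om S C (space M) n)) \<longlonglongrightarrow> measure M (\<Union>n. Om S C (space M) n)"
    using OPs by (intro finite_Lim_measure_incseq incseq_SucI) auto
  have "measure M (\<Union>n. Om S C (space M) n) \<le> (F/t) powr p"
    using bound_n by (intro LIMSEQ_le_const2[OF lim]) auto
  then have "measure M (\<Union>n. Om S C (space M) n) powr (1/p) \<le> ((F/t) powr p) powr (1/p)"
    using p by (intro powr_mono2) auto
  also have "\<dots> = F / t" using p t F by (simp add: powr_powr)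
  finally show ?thesis unfolding Omega using t by (simp add: pos_le_divide_eq mult.commute)
qed

lemma omega_sets:
  fixes \<phi> :: "'a \<Rightarrow> real"
  assumes M: "prob_space M" and tr: "is_tree_with M T C"
    and phi: "integrable M \<phi>" "\<forall>x\<in>space M. 0 \<le> \<phi> x"
    and t: "0 < t"
  shows "{x\<in>space M. ennreal t < maximal_op M T \<phi> x} \<in> sets M"
proof -
  interpret prob_space M by (rule M)
  have fm: "finite_measure M" by (rule finite_measureI) (simp add: emeasure_space_1)
  note trd = tr[unfolded is_tree_with_def]
  have root: "space M \<in> T" using trd by (rule conjunct1)
  have Tsets: "\<And>I. I\<in>T \<Longrightarrow> I \<in> sets M \<and> 0 < measure M I"
    using conjunct1[OF conjunct2[OF trd]] by blast
  have Teq: "T = (\<Union>m. tree_level C (space M) m)"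
    using conjunct1[OF conjunct2[OF conjunct2[OF conjunct2[OF trd]]]] .
  define g where "g x = \<phi> x - t" for x
  have gi: "integrable M g" unfolding g_def by (intro Bochner_Integration.integrable_diff phi(1) integrable_const)
  have nu: "(LINT x:A|M. g x) = (LINT x:A|M. \<phi> x) - t * measure M A" if "A \<in> sets M" for A
  proof -
    have "(LINT x:A|M. g x) = (LINT x:A|M. \<phi> x) - (LINT x:A|M. t)"
      unfolding g_def by (intro set_integral_diff(2) set_integrable_of_integrable phi(1) integrable_const that)
    also have "(LINT x:A|M. t) = measure M A * t"
      using that by (subst set_integral_const) auto
    finally show ?thesis by simp
  qed
  define S where "S = {I\<in>T. 0 < (LINT x:I|M. g x)}"
  have SsubT: "S \<subseteq> T" unfolding S_def by blast
  have Spos: "\<And>I. I \<in> S \<Longrightarrow> 0 \<le> (LINT x:I|M. g x)" unfolding S_def by (blast intro: less_imp_le)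
  have OPs: "Om S C (space M) n \<in> sets M \<and> Om S C (space M) n \<subseteq> space M \<and> Om S C (space M) n \<subseteq> \<Union>S
     \<and> 0 \<le> (LINT x:Om S C (space M) n|M. g x) \<and> Om S C (space M) n \<subseteq> Om S C (space M) (Suc n)" for n
    by (rule Om_props[OF fm tr SsubT gi Spos root])
  have key: "(ennreal t < (\<integral>\<^sup>+y\<in>I. ennreal \<bar>\<phi> y\<bar> \<partial>M) / emeasure M I) \<longleftrightarrow> I \<in> S" if I: "I \<in> T" for I
  proof -
    have Is: "I \<in> sets M" "0 < measure M I" using Tsets[OF I] by auto
    have "(\<integral>\<^sup>+y\<in>I. ennreal \<bar>\<phi> y\<bar> \<partial>M) / emeasure M I = ennreal ((LINT x:I|M. \<phi> x) / measure M I)"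
      using Is nnint_eq[OF phi Is(1)] set_integral_nonneg_real[OF phi(2), of I]
      by (simp add: emeasure_eq_measure divide_ennreal)
    then have "(ennreal t < (\<integral>\<^sup>+y\<in>I. ennreal \<bar>\<phi> y\<bar> \<partial>M) / emeasure M I) \<longleftrightarrow> t < (LINT x:I|M. \<phi> x) / measure M I"
      using t by (simp add: ennreal_less_iff)
    also have "\<dots> \<longleftrightarrow> t * measure M I < (LINT x:I|M. \<phi> x)"
      using Is by (simp add: pos_less_divide_eq)
    also have "\<dots> \<longleftrightarrow> I \<in> S" unfolding S_def using nu[OF Is(1)] I by auto
    finally show ?thesis .
  qed
  have Omega: "{x\<in>space M. ennreal t < maximal_op M T \<phi> x} = (\<Union>n. Om S C (space M) n)"
  proof
    show "{x\<in>space M. ennreal t < maximal_op M T \<phi> x} \<subseteq> (\<Union>n. Om S C (space M) n)"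
    proof
      fix x assume x: "x \<in> {x\<in>space M. ennreal t < maximal_op M T \<phi> x}"
      then obtain I where I: "I \<in> T" "x \<in> I" "ennreal t < (\<integral>\<^sup>+y\<in>I. ennreal \<bar>\<phi> y\<bar> \<partial>M) / emeasure M I"
        unfolding maximal_op_def by (auto simp: less_SUP_iff)
      then have IS: "I \<in> S" using key by auto
      from I(1) Teq obtain m where "I \<in> tree_level C (space M) m" by auto
      then have "I \<subseteq> Om S C (space M) m" using Om_level[OF tr root _ IS] by auto
      then show "x \<in> (\<Union>n. Om S C (space M) n)" using I by auto
    qed
  next
    show "(\<Union>n. Om S C (space M) n) \<subseteq> {x\<in>space M. ennreal t < maximal_op M T \<phi> x}"
    proof
      fix x assume "x \<in> (\<Union>n. Om S C (space M) n)"
      then obtain n where xn: "x \<in> Om S C (space M) n" by auto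
      then obtain I where I: "I \<in> S" "x \<in> I" using OPs[of n] by auto
      have "ennreal t < (\<integral>\<^sup>+y\<in>I. ennreal \<bar>\<phi> y\<bar> \<partial>M) / emeasure M I"
        using key I SsubT by auto
      then have "ennreal t < maximal_op M T \<phi> x"
        unfolding maximal_op_def using I SsubT by (auto simp: less_SUP_iff)
      then show "x \<in> {x\<in>space M. ennreal t < maximal_op M T \<phi> x}" using xn OPs[of n] by auto
    qed
  qed
  have "(\<lambda>n. Om S C (space M) n) ` UNIV \<subseteq> sets M" using OPs by blast
  then show ?thesis unfolding Omega by (rule sets.countable_UN)
qed



lemma tree_level_nonempty:
  assumes tr: "is_tree_with M T C"
  shows "I \<in> T \<Longrightarrow> tree_level C I m \<noteq> {}"
proof (induction m arbitrary: I)
  case 0 then show ?case by simp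
next
  case (Suc m)
  have c: "2 \<le> card (C I)" "C I \<subseteq> T" using tw_C[OF tr Suc.prems] by simp_all
  then have "C I \<noteq> {}" by auto
  then obtain K where K: "K \<in> C I" by blast
  then have "K \<in> T" using c(2) by blast
  then have "tree_level C K m \<noteq> {}" by (rule Suc.IH)
  then show ?case unfolding tree_level_Suc' using K by blast
qed

lemma chord_powr:
  fixes a e q :: real
  assumes q: "0 < q" "q < 1" and a: "0 < a" "a < 1" and e: "a \<le> e" "e \<le> 1"
  shows "(1 - (e-a)/(1-a)) * a powr q + (e-a)/(1-a) \<le> e powr q"
proof -
  define th where "th = (e-a)/(1-a)"
  have th: "0 \<le> th" "th \<le> 1" using a e unfolding th_def by (auto simp: field_simps)
  have cv: "convex_on {0<..} (\<lambda>x::real. x powr (1/q))" using q by (intro powr_convex) (simp add: field_simps)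
  have x: "a powr q \<in> {0<..}" using a by simp
  have y: "(1::real) \<in> {0<..}" by simp
  have "((1 - th) *\<^sub>R a powr q + th *\<^sub>R 1) powr (1/q) \<le> (1 - th) * (a powr q) powr (1/q) + th * 1 powr (1/q)"
    by (rule convex_onD[OF cv th x y])
  also have "\<dots> = (1 - th) * a + th" using a q by (simp add: powr_powr)
  also have "\<dots> = a + th * (1 - a)" by (simp add: algebra_simps)
  also have "\<dots> = e" using a unfolding th_def by simp
  finally have le: "((1 - th) * a powr q + th) powr (1/q) \<le> e" by simp
  have pos: "0 \<le> (1 - th) * a powr q + th" using th by simp
  have "(1 - th) * a powr q + th = (((1 - th) * a powr q + th) powr (1/q)) powr q"
    using pos q by (simp add: powr_powr)
  also have "\<dots> \<le> e powr q" using le q by (intro powr_mono2) auto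
  finally show ?thesis unfolding th_def .
qed

lemma lower_witness:
  assumes M: "prob_space M" and tr: "is_tree_with M T C" and p: "1 < p" and f: "0 < f" "f \<le> F"
  shows "\<exists>\<phi>. integrable M \<phi> \<and> (\<forall>x\<in>space M. 0 \<le> \<phi> x) \<and> integral\<^sup>L M \<phi> = f
    \<and> triple_norm M p \<phi> = ennreal F \<and> ennreal F \<le> weak_norm M p (maximal_op M T \<phi>)"
proof -
  interpret prob_space M by (rule M)
  have fm: "finite_measure M" by (rule finite_measureI) (simp add: emeasure_space_1)
  define q where "q = 1 - 1/p"
  have q: "0 < q" "q < 1" using p unfolding q_def by (auto simp: field_simps)
  have Fpos: "0 < F" using f by simp
  have fF: "0 < f/F" using f Fpos by simp
  define \<delta> where "\<delta> = min (1/2) ((f/F) powr (1/q))"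
  have \<delta>: "0 < \<delta>" unfolding \<delta>_def using fF f Fpos by simp
  have "eventually (\<lambda>m. Sup (measure M ` tree_level C (space M) m) < \<delta>) sequentially"
    using order_tendstoD(2)[OF tw_lim[OF tr] \<delta>] .
  then obtain m where m: "Sup (measure M ` tree_level C (space M) m) < \<delta>"
    by (auto simp: eventually_sequentially)
  have root: "space M \<in> T" by (rule tw_root[OF tr])
  obtain I where I: "I \<in> tree_level C (space M) m"
    using tree_level_nonempty[OF tr root, of m] by blast
  have IT: "I \<in> T" using tree_level_sub[OF tr root, of m] I by blast
  define a where "a = measure M I"
  have Is: "I \<in> sets M" and apos: "0 < a" using tw_T[OF tr IT] unfolding a_def by simp_all
  have Isp: "I \<subseteq> space M" using Is by (rule sets.sets_into_space)
  have bdd: "bdd_above (measure M ` tree_level C (space M) m)"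
    by (rule bdd_aboveI[of _ 1]) (auto simp: prob_le_1)
  have "a \<le> Sup (measure M ` tree_level C (space M) m)"
    unfolding a_def using bdd I by (intro cSup_upper) auto
  then have a\<delta>: "a < \<delta>" using m by simp
  then have a1: "a < 1" and a2: "a < (f/F) powr (1/q)" unfolding \<delta>_def by auto
  have "a powr q < ((f/F) powr (1/q)) powr q"
    using a2 apos q by (intro powr_less_mono2) auto
  also have "\<dots> = f/F" using fF q f Fpos by (simp add: powr_powr)
  finally have aq: "a powr q < f/F" .
  define h where "h = F * a powr (-1/p)"
  have pa: "a powr (-1/p) * a = a powr q"
  proof -
    have "a powr (-1/p) * a = a powr (-1/p) * a powr 1" using apos by simp
    also have "\<dots> = a powr (-1/p + 1)" by (rule powr_add[symmetric])
    finally show ?thesis unfolding q_def by simp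
  qed
  have ha: "h * a = F * a powr q" unfolding h_def using pa by (simp add: mult.assoc)
  have haf: "h * a \<le> f"
  proof -
    have "F * a powr q \<le> F * (f/F)" using aq Fpos by (intro mult_left_mono) auto
    then show ?thesis using ha Fpos by simp
  qed
  have hF: "F \<le> h"
  proof -
    have "1 powr (-1/p) \<le> a powr (-1/p)" using apos a1 p by (intro powr_mono2') auto
    then have "1 \<le> a powr (-1/p)" by simp
    then show ?thesis unfolding h_def using Fpos by simp
  qed
  have hpos: "0 < h" using hF Fpos by simp
  define c where "c = (f - h * a) / (1 - a)"
  have c0: "0 \<le> c" unfolding c_def using haf a1 by simp
  have cF: "c \<le> (F - h * a) / (1 - a)" unfolding c_def using a1 f by (intro divide_right_mono) auto
  have ch: "c \<le> h"
  proof -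
    have "(F - h * a) / (1 - a) \<le> h" using a1 hF by (simp add: divide_le_eq algebra_simps)
    then show ?thesis using cF by simp
  qed
  have cf: "c * (1 - a) = f - h * a" unfolding c_def using a1 by simp
  define \<phi> where "\<phi> x = c + (h - c) * indicator I x" for x
  have \<phi>nn: "\<forall>x\<in>space M. 0 \<le> \<phi> x"
    unfolding \<phi>_def using c0 hpos by (simp add: indicator_def)
  have Ifin: "emeasure M I < \<infinity>" using emeasure_finite[of I] by (simp add: less_top[symmetric])
  have int2: "integrable M (\<lambda>x. (h - c) * indicator I x :: real)"
    by (intro integrable_mult_right integrable_real_indicator Is Ifin)
  have \<phi>i: "integrable M \<phi>" unfolding \<phi>_def
    by (intro Bochner_Integration.integrable_add integrable_const int2)
  have setint: "(LINT x:E|M. \<phi> x) = c * measure M E + (h - c) * measure M (E \<inter> I)" if E: "E \<in> sets M" for E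
  proof -
    have EI: "E \<inter> I \<in> sets M" using E Is by (rule sets.Int)
    have Efin: "emeasure M E < \<infinity>" using emeasure_finite[of E] by (simp add: less_top[symmetric])
    have EIfin: "emeasure M (E \<inter> I) < \<infinity>" using emeasure_finite[of "E \<inter> I"] by (simp add: less_top[symmetric])
    have eq: "(\<lambda>x. indicator E x *\<^sub>R \<phi> x) = (\<lambda>x. c * indicator E x + (h - c) * indicator (E \<inter> I) x)"
      unfolding \<phi>_def by (simp add: fun_eq_iff indicator_def)
    have i1: "integrable M (\<lambda>x. c * indicator E x :: real)"
      by (intro integrable_mult_right integrable_real_indicator E Efin)
    have i2: "integrable M (\<lambda>x. (h - c) * indicator (E \<inter> I) x :: real)"
      by (intro integrable_mult_right integrable_real_indicator EI EIfin)
    have "(LINT x:E|M. \<phi> x) = integral\<^sup>L M (\<lambda>x. c * indicator E x + (h - c) * indicator (E \<inter> I) x)"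
      unfolding set_lebesgue_integral_def eq ..
    also have "\<dots> = integral\<^sup>L M (\<lambda>x. c * indicator E x) + integral\<^sup>L M (\<lambda>x. (h - c) * indicator (E \<inter> I) x)"
      by (rule Bochner_Integration.integral_add[OF i1 i2])
    also have "\<dots> = c * measure M E + (h - c) * measure M (E \<inter> I)"
      using E EI by (simp add: sets.Int_space_eq2)
    finally show ?thesis .
  qed
  have intf: "integral\<^sup>L M \<phi> = f"
  proof -
    have "integral\<^sup>L M \<phi> = integral\<^sup>L M (\<lambda>x. c) + integral\<^sup>L M (\<lambda>x. (h - c) * indicator I x)"
      unfolding \<phi>_def by (rule Bochner_Integration.integral_add[OF integrable_const int2])
    also have "\<dots> = c + (h - c) * a" using Is unfolding a_def by (simp add: sets.Int_space_eq2 prob_space)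
    also have "\<dots> = c * (1 - a) + h * a" by (simp add: algebra_simps)
    also have "\<dots> = f" using cf by simp
    finally show ?thesis .
  qed
  have setI: "(LINT x:I|M. \<phi> x) = h * a" using setint[OF Is] unfolding a_def by (simp add: algebra_simps)
  have nnE: "(\<integral>\<^sup>+x\<in>E. ennreal \<bar>\<phi> x\<bar> \<partial>M) = ennreal (c * measure M E + (h - c) * measure M (E \<inter> I))"
    if E: "E \<in> sets M" for E
    using nnint_eq[OF \<phi>i \<phi>nn E] setint[OF E] by simp
  have bound: "c * e + (h - c) * e1 \<le> F * e powr q"
    if e: "0 < e" "e \<le> 1" and e1: "0 \<le> e1" "e1 \<le> e" "e1 \<le> a" for e e1
  proof (cases "e \<le> a")
    case True
    have "c * e + (h - c) * e1 \<le> c * e + (h - c) * e" using ch e1 by (intro add_left_mono mult_left_mono) auto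
    also have "\<dots> = F * (a powr (-1/p) * e)" unfolding h_def by (simp add: algebra_simps)
    also have "\<dots> \<le> F * (e powr (-1/p) * e)"
    proof -
      have "a powr (-1/p) \<le> e powr (-1/p)" using True e p by (intro powr_mono2') auto
      then show ?thesis using Fpos e by (intro mult_left_mono mult_right_mono) auto
    qed
    also have "e powr (-1/p) * e = e powr q"
    proof -
      have "e powr (-1/p) * e = e powr (-1/p) * e powr 1" using e by simp
      also have "\<dots> = e powr (-1/p + 1)" by (rule powr_add[symmetric])
      finally show ?thesis unfolding q_def by simp
    qed
    finally show ?thesis .
  next
    case False
    have "c * e + (h - c) * e1 \<le> c * e + (h - c) * a" using ch e1 by (intro add_left_mono mult_left_mono) auto
    also have "\<dots> = c * (e - a) + h * a" by (simp add: algebra_simps)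
    also have "\<dots> \<le> (F - h * a) / (1 - a) * (e - a) + h * a"
      using cF False by (intro add_right_mono mult_right_mono) auto
    also have "\<dots> = F * ((1 - (e-a)/(1-a)) * a powr q + (e-a)/(1-a))"
    proof -
      define th where "th = (e-a)/(1-a)"
      have "(F - h * a) / (1 - a) * (e - a) = (F - h * a) * th" unfolding th_def by simp
      then have "(F - h * a) / (1 - a) * (e - a) + h * a = (F - F * a powr q) * th + F * a powr q"
        unfolding ha by simp
      also have "\<dots> = F * ((1 - th) * a powr q + th)" by (simp add: algebra_simps)
      finally show ?thesis unfolding th_def .
    qed
    also have "\<dots> \<le> F * e powr q"
      using chord_powr[OF q apos a1 _ e(2)] False Fpos by (intro mult_left_mono) auto
    finally show ?thesis .
  qed
  have tn: "triple_norm M p \<phi> = ennreal F"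
  proof (rule antisym)
    show "triple_norm M p \<phi> \<le> ennreal F"
      unfolding triple_norm_def
    proof (rule SUP_least)
      fix E assume "E \<in> {E \<in> sets M. 0 < measure M E}"
      then have E: "E \<in> sets M" "0 < measure M E" by auto
      define e where "e = measure M E"
      define e1 where "e1 = measure M (E \<inter> I)"
      have e1: "0 \<le> e1" "e1 \<le> e" "e1 \<le> a" unfolding e1_def e_def a_def
        using E Is by (auto intro!: finite_measure_mono)
      have e: "0 < e" "e \<le> 1" unfolding e_def using E by (auto simp: prob_le_1)
      have Lnn: "0 \<le> c * e + (h - c) * e1" using c0 ch e e1 by simp
      have "e powr (-1+1/p) * (c * e + (h - c) * e1) \<le> e powr (-1+1/p) * (F * e powr q)"
        using bound[OF e e1] by (intro mult_left_mono) auto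
      also have "\<dots> = F * (e powr (-q) * e powr q)" unfolding q_def by (simp add: algebra_simps)
      also have "e powr (-q) * e powr q = 1" using e by (simp add: powr_add[symmetric])
      finally have hle: "e powr (-1+1/p) * (c * e + (h - c) * e1) \<le> F" by simp
      show "ennreal (measure M E powr (-1 + 1/p)) * (\<integral>\<^sup>+x\<in>E. ennreal \<bar>\<phi> x\<bar> \<partial>M) \<le> ennreal F"
        unfolding nnE[OF E(1)] e_def[symmetric] e1_def[symmetric]
        using Lnn ennreal_leI[OF hle] by (simp add: ennreal_mult[symmetric])
    qed
  next
    have "ennreal (measure M I powr (-1 + 1/p)) * (\<integral>\<^sup>+x\<in>I. ennreal \<bar>\<phi> x\<bar> \<partial>M) \<le> triple_norm M p \<phi>"
      unfolding triple_norm_def by (rule SUP_upper) (use Is apos in \<open>auto simp: a_def\<close>)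
    moreover have "ennreal (measure M I powr (-1 + 1/p)) * (\<integral>\<^sup>+x\<in>I. ennreal \<bar>\<phi> x\<bar> \<partial>M) = ennreal F"
    proof -
      have "(\<integral>\<^sup>+x\<in>I. ennreal \<bar>\<phi> x\<bar> \<partial>M) = ennreal (h * a)"
        using nnint_eq[OF \<phi>i \<phi>nn Is] setI by simp
      moreover have "a powr (-1 + 1/p) * (h * a) = F"
      proof -
        have "a powr (-1 + 1/p) * (h * a) = F * (a powr (-q) * a powr q)"
          unfolding ha q_def by (simp add: algebra_simps)
        also have "a powr (-q) * a powr q = 1" using apos by (simp add: powr_add[symmetric])
        finally show ?thesis by simp
      qed
      ultimately show ?thesis using hpos apos by (simp add: ennreal_mult[symmetric] a_def[symmetric])
    qed
    ultimately show "ennreal F \<le> triple_norm M p \<phi>" by simp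
  qed
  have Mge: "ennreal h \<le> maximal_op M T \<phi> x" if x: "x \<in> I" for x
  proof -
    have "(\<integral>\<^sup>+y\<in>I. ennreal \<bar>\<phi> y\<bar> \<partial>M) / emeasure M I \<le> maximal_op M T \<phi> x"
      unfolding maximal_op_def by (rule SUP_upper) (use IT x in auto)
    moreover have "(\<integral>\<^sup>+y\<in>I. ennreal \<bar>\<phi> y\<bar> \<partial>M) / emeasure M I = ennreal h"
    proof -
      have "(\<integral>\<^sup>+y\<in>I. ennreal \<bar>\<phi> y\<bar> \<partial>M) = ennreal (h * a)"
        using nnint_eq[OF \<phi>i \<phi>nn Is] setI by simp
      moreover have "emeasure M I = ennreal a" unfolding a_def by (simp add: emeasure_eq_measure)
      ultimately show ?thesis using hpos apos by (simp add: divide_ennreal)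
    qed
    ultimately show ?thesis by simp
  qed
  define W where "W = weak_norm M p (maximal_op M T \<phi>)"
  have Wt: "ennreal (t * a powr (1/p)) \<le> W" if t: "0 < t" "t < h" for t
  proof -
    define \<Omega> where "\<Omega> = {x\<in>space M. ennreal t < maximal_op M T \<phi> x}"
    have \<Omega>s: "\<Omega> \<in> sets M" unfolding \<Omega>_def by (rule omega_sets[OF M tr \<phi>i \<phi>nn t(1)])
    have "I \<subseteq> \<Omega>"
    proof
      fix x assume x: "x \<in> I"
      have "ennreal t < ennreal h" using t by (simp add: ennreal_less_iff)
      also have "\<dots> \<le> maximal_op M T \<phi> x" by (rule Mge[OF x])
      finally show "x \<in> \<Omega>" unfolding \<Omega>_def using x Isp by auto
    qed
    then have "a \<le> measure M \<Omega>" unfolding a_def using \<Omega>s by (rule finite_measure_mono)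
    then have "t * a powr (1/p) \<le> t * measure M \<Omega> powr (1/p)"
      using t apos p by (intro mult_left_mono powr_mono2) auto
    then have "ennreal (t * a powr (1/p)) \<le> ennreal (t * measure M \<Omega> powr (1/p))"
      by (rule ennreal_leI)
    also have "\<dots> \<le> W" unfolding W_def weak_norm_def \<Omega>_def
      by (rule SUP_upper) (use t in auto)
    finally show ?thesis .
  qed
  have FW: "ennreal F \<le> W"
  proof (rule ccontr)
    assume "\<not> ennreal F \<le> W"
    then have WF: "W < ennreal F" by simp
    then obtain w where w: "W = ennreal w" "0 \<le> w" by (cases W) auto
    have wF: "w < F" using WF w Fpos by (simp add: ennreal_less_iff)
    define r where "r = a powr (1/p)"
    have r: "0 < r" unfolding r_def using apos by simp
    have hr: "h * r = F"
    proof -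
      have "h * r = F * (a powr (-1/p) * a powr (1/p))" unfolding h_def r_def by (simp add: algebra_simps)
      also have "a powr (-1/p) * a powr (1/p) = 1" using apos by (simp add: powr_add[symmetric])
      finally show ?thesis by simp
    qed
    have wr: "w / r < h" using wF hr r by (simp add: divide_less_eq)
    define t where "t = (w / r + h) / 2"
    have wr0: "0 \<le> w / r" using w r by simp
    have t: "0 < t" "t < h" unfolding t_def using wr wr0 hpos by auto
    have "w < t * r" unfolding t_def using wr r by (simp add: field_simps)
    moreover have "ennreal (t * r) \<le> ennreal w" using Wt[OF t] w unfolding r_def by simp
    then have "t * r \<le> w" using w by simp
    ultimately show False by simp
  qed
  show ?thesis using \<phi>i \<phi>nn intf tn FW unfolding W_def by blast
qed


theorem corollary3p2:
  fixes M :: "'a measure" and T :: "'a set set" and p f F :: real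
  assumes "prob_space M" and "nonatomic M" and "is_tree M T"
    and "1 < p" and "0 < f" and "f \<le> F"
  shows "Bfun M T p f F = ennreal F"
proof -
  obtain C where tr: "is_tree_with M T C" using assms(3) unfolding is_tree_def by blast
  have F0: "0 \<le> F" using assms(5,6) by simp
  define Sset where "Sset = {weak_norm M p (maximal_op M T \<phi>) | \<phi>.
           integrable M \<phi> \<and> (\<forall>x\<in>space M. 0 \<le> \<phi> x) \<and>
           integral\<^sup>L M \<phi> = f \<and> triple_norm M p \<phi> = ennreal F}"
  have B: "Bfun M T p f F = Sup Sset" unfolding Bfun_def Sset_def ..
  have up: "y \<le> ennreal F" if y: "y \<in> Sset" for y
  proof -
    from y obtain \<phi> where yphi: "y = weak_norm M p (maximal_op M T \<phi>)" and
      \<phi>: "integrable M \<phi>" "\<forall>x\<in>space M. 0 \<le> \<phi> x" "triple_norm M p \<phi> = ennreal F"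
      unfolding Sset_def by blast
    show ?thesis unfolding yphi weak_norm_def
    proof (rule SUP_least)
      fix t :: real assume "t \<in> {0<..}"
      then have t: "0 < t" by simp
      show "ennreal (t * measure M {x\<in>space M. ennreal t < maximal_op M T \<phi> x} powr (1/p)) \<le> ennreal F"
        by (rule ennreal_leI[OF upper_bound[OF assms(1) tr \<phi>(1) \<phi>(2) \<phi>(3) assms(4) t F0]])
    qed
  qed
  obtain \<phi> where \<phi>: "integrable M \<phi>" "\<forall>x\<in>space M. 0 \<le> \<phi> x" "integral\<^sup>L M \<phi> = f"
    "triple_norm M p \<phi> = ennreal F" "ennreal F \<le> weak_norm M p (maximal_op M T \<phi>)"
    using lower_witness[OF assms(1) tr assms(4) assms(5) assms(6)] by blast
  have mem: "weak_norm M p (maximal_op M T \<phi>) \<in> Sset" unfolding Sset_def using \<phi> by blast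
  show ?thesis unfolding B
  proof (rule antisym)
    show "Sup Sset \<le> ennreal F" by (rule Sup_least) (rule up)
    show "ennreal F \<le> Sup Sset" using \<phi>(5) Sup_upper[OF mem] by (rule order_trans)
  qed
qed

end
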